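(* Let $(V_1,V_2)$ be a pair of commuting isometries on a Hilbert space $\mathcal H$ with $C(V_1,V_2)\ge0$ and $C(V_1,V_2)\neq0$. Then $\sigma(V_1,V_2)=\overline{\mathbb D^2}$ and every point $(w_1,w_2)\in\mathbb D^2$ is a joint eigenvalue of $(V_1^*,V_2^* )$. In particular, for every $(w_1,w_2)\in\mathbb D^2$, the non-singularity of the Koszul complex of $(V_1-w_1I,V_2-w_2I)$ is broken at the third stage.
   Context: Defect operator: $C(V_1,V_2)=I-V_1V_1^*-V_2V_2^*+V_1V_2V_2^*V_1^*$. For commuting bounded operators $T_1,T_2$ on $\mathcal H$, the Koszul complex is $0\xrightarrow{\delta_0}\mathcal H\xrightarrow{\delta_1}\mathcal H\oplus\mathcal H\xrightarrow{\delta_2}\mathcal H\xrightarrow{\delta_3}0$ with $\delta_1h=(T_1h,T_2h)$, $\delta_2(h_1,h_2)=T_1h_2-T_2h_1$; $\sigma(T_1,T_2)$ (Taylor joint spectrum) is the set of $(\lambda_1,\lambda_2)$ for which the complex of $(T_1-\lambda_1I,T_2-\lambda_2I)$ is not exact. The non-singularity breaks at stage $n$ if $\operatorname{ran}\delta_{n-1}\ne\ker\delta_n$; breaking at stage 3 means $\operatorname{ran}T_1+\operatorname{ran}T_2\neq\mathcal H$. *)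

theory Defs
  imports "HOL-Analysis.Analysis"
begin

class complex_inner = ab_group_add +
  fixes scaleC :: "complex \<Rightarrow> 'a \<Rightarrow> 'a" (infixr "*\<^sub>C" 75)
    and cinner :: "'a \<Rightarrow> 'a \<Rightarrow> complex"
  assumes scaleC_add_right: "a *\<^sub>C (x + y) = a *\<^sub>C x + a *\<^sub>C y"
    and scaleC_add_left: "(a + b) *\<^sub>C x = a *\<^sub>C x + b *\<^sub>C x"
    and scaleC_scaleC: "a *\<^sub>C (b *\<^sub>C x) = (a * b) *\<^sub>C x"
    and scaleC_one: "1 *\<^sub>C x = x"
    and cinner_add_left: "cinner (x + y) z = cinner x z + cinner y z"
    and cinner_scaleC_left: "cinner (a *\<^sub>C x) y = a * cinner x y"
    and cinner_commute: "cinner y x = cnj (cinner x y)"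
    and cinner_ge_zero: "Re (cinner x x) \<ge> 0"
    and cinner_eq_zero_iff: "cinner x x = 0 \<longleftrightarrow> x = 0"
begin

definition cnorm :: "'a \<Rightarrow> real" where
  "cnorm x = sqrt (Re (cinner x x))"

end

class complex_hilbert = complex_inner +
  assumes cauchy_convergent:
    "(\<forall>e>0. \<exists>N. \<forall>m\<ge>N. \<forall>n\<ge>N. cnorm (X m - X n) < e)
       \<Longrightarrow> \<exists>L. (\<lambda>n. cnorm (X n - L)) \<longlonglongrightarrow> 0"

definition bounded_clinear :: "('a::complex_inner \<Rightarrow> 'a) \<Rightarrow> bool" where
  "bounded_clinear T \<longleftrightarrow>
     (\<forall>x y. T (x + y) = T x + T y) \<and> (\<forall>c x. T (c *\<^sub>C x) = c *\<^sub>C T x) \<and>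
     (\<exists>K. \<forall>x. cnorm (T x) \<le> K * cnorm x)"

definition is_adjoint :: "('a::complex_inner \<Rightarrow> 'a) \<Rightarrow> ('a \<Rightarrow> 'a) \<Rightarrow> bool" where
  "is_adjoint T S \<longleftrightarrow> (\<forall>x y. cinner (T x) y = cinner x (S y))"

definition isometry :: "('a::complex_inner \<Rightarrow> 'a) \<Rightarrow> bool" where
  "isometry V \<longleftrightarrow> bounded_clinear V \<and> (\<forall>x. cnorm (V x) = cnorm x)"

definition defect ::
  "('a::complex_inner \<Rightarrow> 'a) \<Rightarrow> ('a \<Rightarrow> 'a) \<Rightarrow> ('a \<Rightarrow> 'a) \<Rightarrow> ('a \<Rightarrow> 'a) \<Rightarrow> 'a \<Rightarrow> 'a" where
  "defect V1 V1s V2 V2s = (\<lambda>x. x - V1 (V1s x) - V2 (V2s x) + V1 (V2 (V2s (V1s x))))"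

definition positive_op :: "('a::complex_inner \<Rightarrow> 'a) \<Rightarrow> bool" where
  "positive_op A \<longleftrightarrow> (\<forall>x. Im (cinner (A x) x) = 0 \<and> Re (cinner (A x) x) \<ge> 0)"

text \<open>Koszul complex 0 -> H -> H + H -> H -> 0 with d1 h = (T1 h, T2 h),
  d2 (h1, h2) = T1 h2 - T2 h1.  Non-singularity breaks at stage n iff
  ran d_(n-1) differs from ker d_n.\<close>

definition koszul_breaks_at ::
  "nat \<Rightarrow> ('a::complex_inner \<Rightarrow> 'a) \<Rightarrow> ('a \<Rightarrow> 'a) \<Rightarrow> bool" where
  "koszul_breaks_at n T1 T2 \<longleftrightarrow>
     (n = 1 \<and> {h. T1 h = 0 \<and> T2 h = 0} \<noteq> {0}) \<or>
     (n = 2 \<and> {(h1, h2). T1 h2 - T2 h1 = 0} \<noteq> {(T1 h, T2 h) | h. True}) \<or>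
     (n = 3 \<and> {T1 h2 - T2 h1 | h1 h2. True} \<noteq> UNIV)"

definition koszul_exact :: "('a::complex_inner \<Rightarrow> 'a) \<Rightarrow> ('a \<Rightarrow> 'a) \<Rightarrow> bool" where
  "koszul_exact T1 T2 \<longleftrightarrow> (\<forall>n\<in>{1,2,3}. \<not> koszul_breaks_at n T1 T2)"

definition shift_op :: "('a::complex_inner \<Rightarrow> 'a) \<Rightarrow> complex \<Rightarrow> 'a \<Rightarrow> 'a" where
  "shift_op T c = (\<lambda>x. T x - c *\<^sub>C x)"

definition taylor_spectrum ::
  "('a::complex_inner \<Rightarrow> 'a) \<Rightarrow> ('a \<Rightarrow> 'a) \<Rightarrow> (complex \<times> complex) set" where
  "taylor_spectrum T1 T2 =
     {(l1, l2). \<not> koszul_exact (shift_op T1 l1) (shift_op T2 l2)}"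

definition joint_eigenvalue ::
  "('a::complex_inner \<Rightarrow> 'a) \<Rightarrow> ('a \<Rightarrow> 'a) \<Rightarrow> complex \<times> complex \<Rightarrow> bool" where
  "joint_eigenvalue T1 T2 w \<longleftrightarrow>
     (\<exists>x. x \<noteq> 0 \<and> T1 x = fst w *\<^sub>C x \<and> T2 x = snd w *\<^sub>C x)"

end

theory Submission
  imports Defs
begin

lemma scaleC_zero_left[simp]: "0 *\<^sub>C x = 0"
proof -
  have "(0 + 0) *\<^sub>C x = 0 *\<^sub>C x + 0 *\<^sub>C x" by (rule scaleC_add_left)
  then have "0 *\<^sub>C x = 0 *\<^sub>C x + 0 *\<^sub>C x" unfolding add_0_left .
  then show ?thesis by (rule add_cancel_right_right[THEN iffD1])
qed

lemma scaleC_zero_right[simp]: "a *\<^sub>C 0 = 0"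
proof -
  have "a *\<^sub>C (0 + 0) = a *\<^sub>C 0 + a *\<^sub>C 0" by (rule scaleC_add_right)
  then have "a *\<^sub>C 0 = a *\<^sub>C 0 + a *\<^sub>C 0" unfolding add_0_left .
  then show ?thesis by (rule add_cancel_right_right[THEN iffD1])
qed

lemma scaleC_minus_right: "a *\<^sub>C (- x) = - (a *\<^sub>C x)"
proof -
  have "a *\<^sub>C (x + - x) = a *\<^sub>C x + a *\<^sub>C (- x)" by (rule scaleC_add_right)
  then have "a *\<^sub>C x + a *\<^sub>C (- x) = 0" by simp
  then show ?thesis by (simp add: add_eq_0_iff2)
qed

lemma scaleC_diff_right: "a *\<^sub>C (x - y) = a *\<^sub>C x - a *\<^sub>C y"
  by (simp only: diff_conv_add_uminus scaleC_add_right scaleC_minus_right)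

lemma scaleC_minus_left: "(- a) *\<^sub>C x = - (a *\<^sub>C x)"
proof -
  have "(a + - a) *\<^sub>C x = a *\<^sub>C x + (- a) *\<^sub>C x" by (rule scaleC_add_left)
  then have "a *\<^sub>C x + (- a) *\<^sub>C x = 0" by simp
  then show ?thesis by (simp add: add_eq_0_iff2)
qed

lemma scaleC_diff_left: "(a - b) *\<^sub>C x = a *\<^sub>C x - b *\<^sub>C x"
  by (simp only: diff_conv_add_uminus scaleC_add_left scaleC_minus_left)

lemma cinner_zero_left[simp]: "cinner 0 y = 0"
proof -
  have "cinner (0 + 0) y = cinner 0 y + cinner 0 y" by (rule cinner_add_left)
  then have "cinner 0 y = cinner 0 y + cinner 0 y" unfolding add_0_left .
  then show ?thesis by (rule add_cancel_right_right[THEN iffD1])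
qed

lemma cinner_zero_right[simp]: "cinner x 0 = 0"
proof -
  have "cinner x 0 = cnj (cinner 0 x)" by (rule cinner_commute)
  then show ?thesis by simp
qed

lemma cinner_add_right: "cinner x (y + z) = cinner x y + cinner x z"
proof -
  have "cinner x (y + z) = cnj (cinner (y + z) x)" by (rule cinner_commute)
  also have "\<dots> = cnj (cinner y x) + cnj (cinner z x)" by (simp add: cinner_add_left)
  also have "\<dots> = cinner x y + cinner x z"
    by (simp only: cinner_commute[of x y, symmetric] cinner_commute[of x z, symmetric])
  finally show ?thesis .
qed

lemma cinner_scaleC_right: "cinner x (a *\<^sub>C y) = cnj a * cinner x y"
proof -
  have "cinner x (a *\<^sub>C y) = cnj (cinner (a *\<^sub>C y) x)" by (rule cinner_commute)
  also have "\<dots> = cnj a * cnj (cinner y x)" by (simp add: cinner_scaleC_left)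
  also have "\<dots> = cnj a * cinner x y"
    by (simp only: cinner_commute[of x y, symmetric])
  finally show ?thesis .
qed

lemma cinner_minus_left: "cinner (- x) y = - cinner x y"
proof -
  have "cinner (x + - x) y = cinner x y + cinner (- x) y" by (rule cinner_add_left)
  then have "cinner x y + cinner (- x) y = 0" by simp
  then show ?thesis by (simp add: add_eq_0_iff2)
qed

lemma cinner_minus_right: "cinner x (- y) = - cinner x y"
proof -
  have "cinner x (- y) = cnj (cinner (- y) x)" by (rule cinner_commute)
  also have "\<dots> = - cnj (cinner y x)" by (simp add: cinner_minus_left)
  also have "\<dots> = - cinner x y"
    by (simp only: cinner_commute[of x y, symmetric])
  finally show ?thesis .
qed

lemma cinner_diff_left: "cinner (x - y) z = cinner x z - cinner y z"
  by (simp only: diff_conv_add_uminus cinner_add_left cinner_minus_left)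

lemma cinner_diff_right: "cinner x (y - z) = cinner x y - cinner x z"
  by (simp only: diff_conv_add_uminus cinner_add_right cinner_minus_right)

lemma cinner_self_Im: "Im (cinner x x) = 0"
proof -
  have h: "cinner x x = cnj (cinner x x)" by (rule cinner_commute)
  have "Im (cinner x x) = Im (cnj (cinner x x))" using h by (rule arg_cong)
  then show ?thesis by simp
qed

lemma cinner_self_real: "cinner x x = complex_of_real (Re (cinner x x))"
  using cinner_self_Im complex_eq_iff by auto

lemma cnorm_sq: "(cnorm x)\<^sup>2 = Re (cinner x x)"
  unfolding cnorm_def using cinner_ge_zero[of x] by simp

lemma cnorm_ge0[simp]: "cnorm x \<ge> 0"
  unfolding cnorm_def using cinner_ge_zero[of x] by simp

lemma cinner_self_cnorm: "cinner x x = complex_of_real ((cnorm x)\<^sup>2)"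
  unfolding cnorm_sq by (rule cinner_self_real)

lemma cnorm_eq_0[simp]: "cnorm x = 0 \<longleftrightarrow> x = 0"
proof -
  have "cnorm x = 0 \<longleftrightarrow> Re (cinner x x) = 0" by (simp add: cnorm_def)
  also have "\<dots> \<longleftrightarrow> cinner x x = 0" using cinner_self_Im[of x] by (simp add: complex_eq_iff)
  also have "\<dots> \<longleftrightarrow> x = 0" by (rule cinner_eq_zero_iff)
  finally show ?thesis .
qed

lemma cnorm_zero[simp]: "cnorm 0 = 0" by simp

lemma cnorm_scaleC: "cnorm (a *\<^sub>C x) = cmod a * cnorm x"
proof -
  have "cinner (a *\<^sub>C x) (a *\<^sub>C x) = a * cnj a * cinner x x"
    by (simp add: cinner_scaleC_left cinner_scaleC_right)
  also have "a * cnj a = complex_of_real ((cmod a)\<^sup>2)"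
    by (rule complex_norm_square[symmetric])
  finally have "Re (cinner (a *\<^sub>C x) (a *\<^sub>C x)) = (cmod a)\<^sup>2 * (cnorm x)\<^sup>2"
    by (simp add: cinner_self_cnorm)
  then have "(cnorm (a *\<^sub>C x))\<^sup>2 = (cmod a * cnorm x)\<^sup>2"
    by (simp add: cnorm_sq power_mult_distrib)
  then show ?thesis
    by (simp add: power2_eq_iff_nonneg)
qed

lemma cnorm_minus: "cnorm (- x) = cnorm x"
  using cnorm_scaleC[of "-1" x] by (simp add: scaleC_minus_left scaleC_one)

lemma cnorm_diff_sym: "cnorm (x - y) = cnorm (y - x)"
  using cnorm_minus[of "y - x"] by simp

lemma cnorm_add_sq: "(cnorm (x + y))\<^sup>2 = (cnorm x)\<^sup>2 + (cnorm y)\<^sup>2 + 2 * Re (cinner x y)"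
proof -
  have "cinner (x+y) (x+y) = cinner x x + cinner y y + (cinner x y + cnj (cinner x y))"
    by (simp add: cinner_add_left cinner_add_right cinner_commute[of x y])
  then show ?thesis by (simp add: cnorm_sq)
qed

lemma pythagoras: "cinner x y = 0 \<Longrightarrow> (cnorm (x + y))\<^sup>2 = (cnorm x)\<^sup>2 + (cnorm y)\<^sup>2"
  by (simp add: cnorm_add_sq)

lemma cinner_ext_right: "(\<And>z. cinner z a = cinner z b) \<Longrightarrow> a = b"
proof -
  assume "\<And>z. cinner z a = cinner z b"
  then have "cinner (a - b) (a - b) = 0" by (simp add: cinner_diff_right)
  then show "a = b" by (simp add: cinner_eq_zero_iff)
qed

lemma cinner_ext_left: "(\<And>z. cinner a z = cinner b z) \<Longrightarrow> a = b"
proof -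
  assume "\<And>z. cinner a z = cinner b z"
  then have "cinner (a - b) (a - b) = 0" by (simp add: cinner_diff_left)
  then show "a = b" by (simp add: cinner_eq_zero_iff)
qed

lemma cauchy_schwarz: "cmod (cinner x y) \<le> cnorm x * cnorm y"
proof (cases "y = 0")
  case True then show ?thesis by simp
next
  case False
  define c where "c = cinner x y"
  define n where "n = (cnorm y)\<^sup>2"
  have npos: "n > 0" using False by (simp add: n_def)
  have yy: "cinner y y = complex_of_real n" by (simp add: n_def cinner_self_cnorm)
  have yx: "cinner y x = cnj c" unfolding c_def by (rule cinner_commute)
  have xx: "cinner x x = complex_of_real ((cnorm x)\<^sup>2)" by (rule cinner_self_cnorm)
  have cc: "c * cnj c = complex_of_real ((cmod c)\<^sup>2)" by (rule complex_norm_square[symmetric])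
  have ccc: "cnj c * c = complex_of_real ((cmod c)\<^sup>2)" using cc by (simp add: mult.commute)
  define w where "w = complex_of_real n *\<^sub>C x - c *\<^sub>C y"
  have "cinner w w = complex_of_real n * complex_of_real n * cinner x x
      - complex_of_real n * cnj c * cinner x y - c * complex_of_real n * cinner y x
      + c * cnj c * cinner y y"
    unfolding w_def
    by (simp add: cinner_diff_left cinner_diff_right cinner_scaleC_left cinner_scaleC_right
        algebra_simps)
  also have "\<dots> = complex_of_real (n * n * (cnorm x)\<^sup>2 - n * (cmod c)\<^sup>2)"
    unfolding yy yx xx c_def[symmetric]
    by (simp add: cc ccc algebra_simps)
  finally have "0 \<le> n * n * (cnorm x)\<^sup>2 - n * (cmod c)\<^sup>2"
    using cinner_ge_zero[of w] by simp
  then have "n * (cmod c)\<^sup>2 \<le> n * (n * (cnorm x)\<^sup>2)" by (simp add: algebra_simps)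
  then have "(cmod c)\<^sup>2 \<le> n * (cnorm x)\<^sup>2" using npos by simp
  then have "(cmod c)\<^sup>2 \<le> (cnorm x * cnorm y)\<^sup>2" by (simp add: n_def power_mult_distrib mult.commute)
  then show ?thesis unfolding c_def
    by (rule power2_le_imp_le) simp
qed

lemma cnorm_triangle: "cnorm (x + y) \<le> cnorm x + cnorm y"
proof -
  have "Re (cinner x y) \<le> cnorm x * cnorm y"
    by (rule order_trans[OF complex_Re_le_cmod cauchy_schwarz])
  then have "(cnorm (x + y))\<^sup>2 \<le> (cnorm x + cnorm y)\<^sup>2"
    by (simp add: cnorm_add_sq power2_sum)
  then show ?thesis
    by (rule power2_le_imp_le) simp
qed

lemma cnorm_triangle_diff: "cnorm (x - y) \<le> cnorm x + cnorm y"
  using cnorm_triangle[of x "- y"] by (simp add: cnorm_minus)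





lemma bcl_add: "bounded_clinear T \<Longrightarrow> T (x + y) = T x + T y"
  by (simp add: bounded_clinear_def)
lemma bcl_scale: "bounded_clinear T \<Longrightarrow> T (c *\<^sub>C x) = c *\<^sub>C T x"
  by (simp add: bounded_clinear_def)
lemma bcl_zero: "bounded_clinear T \<Longrightarrow> T 0 = 0"
  by (metis bcl_scale scaleC_zero_left)
lemma bcl_minus: "bounded_clinear T \<Longrightarrow> T (- x) = - T x"
  by (metis bcl_add bcl_zero add.right_inverse eq_neg_iff_add_eq_0)
lemma bcl_diff: "bounded_clinear T \<Longrightarrow> T (x - y) = T x - T y"
  by (simp only: diff_conv_add_uminus bcl_add bcl_minus)
lemma bcl_bound: "bounded_clinear T \<Longrightarrow> \<exists>K. \<forall>x. cnorm (T x) \<le> K * cnorm x"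
  by (simp add: bounded_clinear_def)
lemma bcl_sum: "bounded_clinear T \<Longrightarrow> T (sum f A) = (\<Sum>a\<in>A. T (f a))"
  by (induction A rule: infinite_finite_induct) (auto simp: bcl_zero bcl_add)

lemma bclI:
  assumes "\<And>x y. T (x + y) = T x + T y" "\<And>c x. T (c *\<^sub>C x) = c *\<^sub>C T x"
    "\<And>x. cnorm (T x) \<le> K * cnorm x"
  shows "bounded_clinear T"
  using assms unfolding bounded_clinear_def by blast

lemma bcl_comp: "bounded_clinear S \<Longrightarrow> bounded_clinear T \<Longrightarrow> bounded_clinear (\<lambda>x. S (T x))"
proof -
  assume S: "bounded_clinear S" and T: "bounded_clinear T"
  obtain K where K: "\<And>x. cnorm (S x) \<le> K * cnorm x" using bcl_bound[OF S] by blast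
  obtain L where L: "\<And>x. cnorm (T x) \<le> L * cnorm x" using bcl_bound[OF T] by blast
  show ?thesis
  proof (rule bclI[where K="max K 0 * max L 0"])
    fix x
    have "cnorm (S (T x)) \<le> K * cnorm (T x)" by (rule K)
    also have "\<dots> \<le> max K 0 * cnorm (T x)" by (intro mult_right_mono) auto
    also have "\<dots> \<le> max K 0 * (max L 0 * cnorm x)"
      using L[of x] mult_right_mono[of L "max L 0" "cnorm x"]
      by (intro mult_left_mono) auto
    finally show "cnorm (S (T x)) \<le> max K 0 * max L 0 * cnorm x" by (simp add: mult.assoc)
  qed (simp_all add: bcl_add[OF S] bcl_add[OF T] bcl_scale[OF S] bcl_scale[OF T])
qed

lemma bcl_id: "bounded_clinear (\<lambda>x. x)"
  by (rule bclI[where K=1]) auto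

lemma bcl_sub: "bounded_clinear S \<Longrightarrow> bounded_clinear T \<Longrightarrow> bounded_clinear (\<lambda>x. S x - T x)"
proof -
  assume S: "bounded_clinear S" and T: "bounded_clinear T"
  obtain K where K: "\<And>x. cnorm (S x) \<le> K * cnorm x" using bcl_bound[OF S] by blast
  obtain L where L: "\<And>x. cnorm (T x) \<le> L * cnorm x" using bcl_bound[OF T] by blast
  show ?thesis
  proof (rule bclI[where K="K + L"])
    fix x
    show "cnorm (S x - T x) \<le> (K + L) * cnorm x"
      using cnorm_triangle_diff[of "S x" "T x"] K[of x] L[of x] by (simp add: distrib_right)
  qed (simp_all add: bcl_add[OF S] bcl_add[OF T] bcl_scale[OF S] bcl_scale[OF T]
        scaleC_add_right scaleC_diff_right)
qed

lemma bcl_scaleC_op: "bounded_clinear (\<lambda>x. c *\<^sub>C x)"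
  by (rule bclI[where K="cmod c"]) (auto simp: scaleC_add_right scaleC_scaleC cnorm_scaleC mult.commute)

lemma adj_add:
  assumes "is_adjoint T S" shows "S (x + y) = S x + S y"
proof (rule cinner_ext_right)
  fix z
  have "cinner z (S (x + y)) = cinner (T z) (x + y)" using assms by (simp add: is_adjoint_def)
  also have "\<dots> = cinner (T z) x + cinner (T z) y" by (rule cinner_add_right)
  also have "\<dots> = cinner z (S x) + cinner z (S y)" using assms by (simp add: is_adjoint_def)
  finally show "cinner z (S (x + y)) = cinner z (S x + S y)" by (simp add: cinner_add_right)
qed

lemma adj_scale:
  assumes "is_adjoint T S" shows "S (c *\<^sub>C x) = c *\<^sub>C S x"
proof (rule cinner_ext_right)
  fix z
  have "cinner z (S (c *\<^sub>C x)) = cinner (T z) (c *\<^sub>C x)" using assms by (simp add: is_adjoint_def)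
  also have "\<dots> = cnj c * cinner (T z) x" by (rule cinner_scaleC_right)
  also have "\<dots> = cnj c * cinner z (S x)" using assms by (simp add: is_adjoint_def)
  finally show "cinner z (S (c *\<^sub>C x)) = cinner z (c *\<^sub>C S x)" by (simp add: cinner_scaleC_right)
qed

lemma adj_eq: "is_adjoint T S \<Longrightarrow> cinner (T x) y = cinner x (S y)"
  by (simp add: is_adjoint_def)

lemma adj_eq': "is_adjoint T S \<Longrightarrow> cinner (S y) x = cinner y (T x)"
  by (metis adj_eq cinner_commute)

lemma adj_zero: "is_adjoint T S \<Longrightarrow> S 0 = 0"
  by (metis adj_scale scaleC_zero_left)

lemma adj_diff: "is_adjoint T S \<Longrightarrow> S (x - y) = S x - S y"
  by (metis adj_add add_diff_cancel diff_add_cancel)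

context
  fixes V Vs :: "'a::complex_inner \<Rightarrow> 'a"
  assumes iso: "isometry V" and adj: "is_adjoint V Vs"
begin

lemma iso_bcl: "bounded_clinear V" using iso by (simp add: isometry_def)
lemma iso_norm: "cnorm (V x) = cnorm x" using iso by (simp add: isometry_def)

lemma adj_bound: "cnorm (Vs y) \<le> cnorm y"
proof (cases "Vs y = 0")
  case True then show ?thesis by simp
next
  case False
  have "(cnorm (Vs y))\<^sup>2 = Re (cinner (V (Vs y)) y)"
    by (simp add: cnorm_sq adj_eq[OF adj])
  also have "\<dots> \<le> cmod (cinner (V (Vs y)) y)" by (rule complex_Re_le_cmod)
  also have "\<dots> \<le> cnorm (Vs y) * cnorm y" using cauchy_schwarz iso_norm by metis
  finally have "cnorm (Vs y) * cnorm (Vs y) \<le> cnorm (Vs y) * cnorm y"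
    by (simp add: power2_eq_square)
  moreover have "cnorm (Vs y) > 0" using False by (metis cnorm_eq_0 cnorm_ge0 less_eq_real_def)
  ultimately show ?thesis by simp
qed

lemma adj_bcl: "bounded_clinear Vs"
  by (rule bclI[where K=1]) (auto simp: adj_add[OF adj] adj_scale[OF adj] adj_bound)

lemma adj_iso_cancel: "Vs (V x) = x"
proof -
  define d where "d = Vs (V x) - x"
  have "cinner x (Vs (V x)) = cinner (V x) (V x)" by (simp add: adj_eq[OF adj])
  also have "\<dots> = cinner x x" by (simp add: cinner_self_cnorm iso_norm)
  finally have xd: "cinner x d = 0" by (simp add: d_def cinner_diff_right)
  have "(cnorm (x + d))\<^sup>2 = (cnorm x)\<^sup>2 + (cnorm d)\<^sup>2" by (rule pythagoras[OF xd])
  moreover have "x + d = Vs (V x)" by (simp add: d_def)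
  moreover have "cnorm (Vs (V x)) \<le> cnorm x" using adj_bound iso_norm by metis
  ultimately have "(cnorm d)\<^sup>2 \<le> 0"
    by (metis add_le_same_cancel1 cnorm_ge0 power_mono)
  then have "d = 0" by simp
  then show ?thesis by (simp add: d_def)
qed

lemma iso_cinner: "cinner (V a) (V b) = cinner a b"
  by (simp add: adj_eq[OF adj] adj_iso_cancel)

end

definition clim :: "(nat \<Rightarrow> 'a::complex_inner) \<Rightarrow> 'a \<Rightarrow> bool" where
  "clim S y \<longleftrightarrow> (\<lambda>n. cnorm (S n - y)) \<longlonglongrightarrow> 0"

lemma clim_unique:
  assumes "clim S a" "clim S b" shows "a = b"
proof -
  have "(\<lambda>n. cnorm (S n - b) + cnorm (S n - a)) \<longlonglongrightarrow> 0 + 0"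
    using assms unfolding clim_def by (intro tendsto_add)
  moreover have "\<forall>n. cnorm (a - b) \<le> cnorm (S n - b) + cnorm (S n - a)"
  proof
    fix n
    have "a - b = (S n - b) - (S n - a)" by simp
    then show "cnorm (a - b) \<le> cnorm (S n - b) + cnorm (S n - a)"
      by (metis cnorm_triangle_diff)
  qed
  ultimately have "cnorm (a - b) \<le> 0"
    by (intro LIMSEQ_le_const) auto
  then show ?thesis by (metis cnorm_eq_0 cnorm_ge0 antisym eq_iff_diff_eq_0)
qed

lemma clim_Suc: "clim S y \<Longrightarrow> clim (\<lambda>n. S (Suc n)) y"
  unfolding clim_def by (rule LIMSEQ_Suc)

lemma clim_bcl:
  assumes T: "bounded_clinear T" and S: "clim S y"
  shows "clim (\<lambda>n. T (S n)) (T y)"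
proof -
  obtain K where K: "\<And>x. cnorm (T x) \<le> K * cnorm x" using bcl_bound[OF T] by blast
  have "(\<lambda>n. K * cnorm (S n - y)) \<longlonglongrightarrow> 0"
    using S unfolding clim_def by (intro tendsto_mult_right_zero)
  then show ?thesis
    unfolding clim_def
    by (rule Lim_null_comparison[rotated])
       (simp add: K bcl_diff[OF T, symmetric])
qed

lemma clim_add: "clim S a \<Longrightarrow> clim R b \<Longrightarrow> clim (\<lambda>n. S n + R n) (a + b)"
proof -
  assume S: "clim S a" and R: "clim R b"
  have "(\<lambda>n. cnorm (S n - a) + cnorm (R n - b)) \<longlonglongrightarrow> 0 + 0"
    using S R unfolding clim_def by (intro tendsto_add)
  then have "(\<lambda>n. cnorm (S n - a) + cnorm (R n - b)) \<longlonglongrightarrow> 0" by simp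
  then show ?thesis
    unfolding clim_def
    apply (rule Lim_null_comparison[rotated])
    apply (rule always_eventually, rule allI)
    apply simp
    by (metis cnorm_triangle add_diff_add)
qed

lemma clim_const: "clim (\<lambda>n. a) a"
  by (simp add: clim_def)

lemma clim_cinner:
  assumes S: "clim S y" shows "(\<lambda>n. cinner (S n) z) \<longlonglongrightarrow> cinner y z"
proof -
  have "(\<lambda>n. cnorm (S n - y) * cnorm z) \<longlonglongrightarrow> 0"
    using S unfolding clim_def by (intro tendsto_mult_left_zero)
  then have "(\<lambda>n. cinner (S n) z - cinner y z) \<longlonglongrightarrow> 0"
    apply (rule Lim_null_comparison[rotated])
    by (simp add: cinner_diff_left[symmetric] cauchy_schwarz)
  then show ?thesis by (rule LIM_zero_cancel)
qed

lemma cnorm_sum_le: "cnorm (sum f A) \<le> (\<Sum>a\<in>A. cnorm (f a))"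
  by (induction A rule: infinite_finite_induct) (auto intro: order_trans[OF cnorm_triangle])

lemma partial_diff:
  fixes m n :: nat
  assumes "m \<le> n" shows "(\<Sum>k<n. f k) - (\<Sum>k<m. f k) = (\<Sum>k\<in>{m..<n}. (f k :: 'a::ab_group_add))"
proof -
  have "{..<n} = {..<m} \<union> {m..<n}" using assms by auto
  moreover have "sum f ({..<m} \<union> {m..<n}) = sum f {..<m} + sum f {m..<n}"
    by (rule sum.union_disjoint) auto
  ultimately show ?thesis by simp
qed

lemma cinner_sum_right: "cinner x (sum f A) = (\<Sum>a\<in>A. cinner x (f a))"
  by (induction A rule: infinite_finite_induct) (auto simp: cinner_add_right)

lemma cauchy_lim:
  fixes X :: "nat \<Rightarrow> 'a::complex_hilbert"
  assumes "\<And>e. e > 0 \<Longrightarrow> \<exists>N. \<forall>m\<ge>N. \<forall>n\<ge>m. cnorm (X n - X m) < e"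
  shows "\<exists>L. clim X L"
proof -
  have "\<forall>e>0. \<exists>N. \<forall>m\<ge>N. \<forall>n\<ge>N. cnorm (X m - X n) < e"
  proof (intro allI impI)
    fix e :: real assume "e > 0"
    then obtain N where N: "\<forall>m\<ge>N. \<forall>n\<ge>m. cnorm (X n - X m) < e" using assms by blast
    show "\<exists>N. \<forall>m\<ge>N. \<forall>n\<ge>N. cnorm (X m - X n) < e"
    proof (intro exI allI impI)
      fix m n assume "m \<ge> N" "n \<ge> N"
      then show "cnorm (X m - X n) < e"
        using N by (cases "m \<le> n") (auto simp: cnorm_diff_sym)
    qed
  qed
  then show ?thesis unfolding clim_def by (rule cauchy_convergent)
qed

lemma conv_abs:
  fixes z :: "nat \<Rightarrow> 'a::complex_hilbert"
  assumes "summable (\<lambda>n. cnorm (z n))"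
  shows "\<exists>L. clim (\<lambda>N. \<Sum>n<N. z n) L"
proof (rule cauchy_lim)
  fix e :: real assume "e > 0"
  then obtain N where N: "\<forall>m\<ge>N. \<forall>n. norm (\<Sum>k\<in>{m..<n}. cnorm (z k)) < e"
    using assms unfolding summable_Cauchy by blast
  show "\<exists>N. \<forall>m\<ge>N. \<forall>n\<ge>m. cnorm ((\<Sum>k<n. z k) - (\<Sum>k<m. z k)) < e"
  proof (intro exI allI impI)
    fix m n assume "N \<le> m" "m \<le> n"
    have "cnorm ((\<Sum>k<n. z k) - (\<Sum>k<m. z k)) = cnorm (\<Sum>k\<in>{m..<n}. z k)"
      using \<open>m \<le> n\<close> by (simp add: partial_diff)
    also have "\<dots> \<le> (\<Sum>k\<in>{m..<n}. cnorm (z k))" by (rule cnorm_sum_le)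
    also have "\<dots> < e" using N \<open>N \<le> m\<close>
      by (metis (no_types, lifting) abs_of_nonneg cnorm_ge0 real_norm_def sum_nonneg)
    finally show "cnorm ((\<Sum>k<n. z k) - (\<Sum>k<m. z k)) < e" .
  qed
qed

lemma cnorm_sum_orth:
  assumes "\<And>m n. m \<noteq> n \<Longrightarrow> cinner (z m) (z n) = 0" "finite A"
  shows "(cnorm (sum z A))\<^sup>2 = (\<Sum>k\<in>A. (cnorm (z k))\<^sup>2)"
  using assms(2)
proof (induction A rule: finite_induct)
  case empty then show ?case by simp
next
  case (insert a F)
  have "cinner (z a) (sum z F) = 0"
  proof -
    have "\<forall>k\<in>F. cinner (z a) (z k) = 0" using insert.hyps(2) assms(1) by metis
    then show ?thesis unfolding cinner_sum_right by (rule sum.neutral)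
  qed
  then show ?case using insert by (simp add: pythagoras)
qed

lemma conv_orth:
  fixes z :: "nat \<Rightarrow> 'a::complex_hilbert"
  assumes "summable (\<lambda>n. (cnorm (z n))\<^sup>2)" "\<And>m n. m \<noteq> n \<Longrightarrow> cinner (z m) (z n) = 0"
  shows "\<exists>L. clim (\<lambda>N. \<Sum>n<N. z n) L"
proof (rule cauchy_lim)
  fix e :: real assume "e > 0"
  then have "e\<^sup>2 > 0" by simp
  then obtain N where N: "\<forall>m\<ge>N. \<forall>n. norm (\<Sum>k\<in>{m..<n}. (cnorm (z k))\<^sup>2) < e\<^sup>2"
    using assms(1) unfolding summable_Cauchy by blast
  show "\<exists>N. \<forall>m\<ge>N. \<forall>n\<ge>m. cnorm ((\<Sum>k<n. z k) - (\<Sum>k<m. z k)) < e"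
  proof (intro exI allI impI)
    fix m n assume "N \<le> m" "m \<le> n"
    have "(cnorm (\<Sum>k\<in>{m..<n}. z k))\<^sup>2 = (\<Sum>k\<in>{m..<n}. (cnorm (z k))\<^sup>2)"
      by (rule cnorm_sum_orth[OF assms(2)]) auto
    also have "\<dots> < e\<^sup>2" using N \<open>N \<le> m\<close>
      by (metis (no_types, lifting) abs_of_nonneg zero_le_power2 real_norm_def sum_nonneg)
    finally have "cnorm (\<Sum>k\<in>{m..<n}. z k) < e"
      using \<open>e > 0\<close> by (simp add: power_less_imp_less_base less_imp_le)
    then show "cnorm ((\<Sum>k<n. z k) - (\<Sum>k<m. z k)) < e"
      using \<open>m \<le> n\<close> by (simp add: partial_diff)
  qed
qed

lemma cinner_sum_left: "cinner (sum f A) x = (\<Sum>a\<in>A. cinner (f a) x)"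
  by (induction A rule: infinite_finite_induct) (auto simp: cinner_add_left)

lemma pow_bcl: "bounded_clinear V \<Longrightarrow> bounded_clinear (V ^^ n)"
proof (induction n)
  case 0
  have "bounded_clinear (\<lambda>x. x)" by (rule bcl_id)
  then show ?case by (simp add: id_def)
next
  case (Suc n)
  have "bounded_clinear (\<lambda>x. V ((V ^^ n) x))" by (rule bcl_comp[OF Suc.prems Suc.IH[OF Suc.prems]])
  moreover have "V ^^ Suc n = (\<lambda>x. V ((V ^^ n) x))" by auto
  ultimately show ?case by simp
qed

lemma pow_norm: "isometry V \<Longrightarrow> cnorm ((V ^^ n) x) = cnorm x"
  by (induction n) (auto simp: isometry_def)

lemma geom_series:
  fixes V :: "'a::complex_hilbert \<Rightarrow> 'a"
  assumes iso: "isometry V" and c: "cmod c < 1"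
  obtains f where "f = u + c *\<^sub>C V f"
    and "\<And>T. bounded_clinear T \<Longrightarrow> (\<And>n. T ((V ^^ n) u) = 0) \<Longrightarrow> T f = 0"
proof -
  have bV: "bounded_clinear V" using iso by (simp add: isometry_def)
  define S where "S = (\<lambda>N. \<Sum>n<N. c ^ n *\<^sub>C (V ^^ n) u)"
  have "summable (\<lambda>n. cmod c ^ n * cnorm u)"
    using c by (intro summable_mult2 summable_geometric) simp
  then have "summable (\<lambda>n. cnorm (c ^ n *\<^sub>C (V ^^ n) u))"
    by (simp add: cnorm_scaleC pow_norm[OF iso] norm_power)
  from conv_abs[OF this] obtain f where "clim (\<lambda>N. \<Sum>n<N. c ^ n *\<^sub>C (V ^^ n) u) f" by blast
  then have lim: "clim S f" unfolding S_def .
  have Ssuc: "S (Suc N) = u + c *\<^sub>C V (S N)" for N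
  proof -
    have "S (Suc N) = c ^ 0 *\<^sub>C (V ^^ 0) u + (\<Sum>n<N. c ^ (Suc n) *\<^sub>C (V ^^ Suc n) u)"
      unfolding S_def by (rule sum.lessThan_Suc_shift)
    also have "(\<Sum>n<N. c ^ (Suc n) *\<^sub>C (V ^^ Suc n) u) = c *\<^sub>C V (S N)"
      unfolding S_def bcl_sum[OF bV] bcl_sum[OF bcl_scaleC_op]
      by (simp add: bcl_scale[OF bV] scaleC_scaleC)
    finally show ?thesis by (simp add: scaleC_one)
  qed
  have fp: "f = u + c *\<^sub>C V f"
  proof (rule clim_unique)
    show "clim (\<lambda>N. S (Suc N)) f" by (rule clim_Suc[OF lim])
    have "clim (\<lambda>N. u + (\<lambda>x. c *\<^sub>C V x) (S N)) (u + (\<lambda>x. c *\<^sub>C V x) f)"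
      by (rule clim_add[OF clim_const clim_bcl[OF bcl_comp[OF bcl_scaleC_op bV] lim]])
    then show "clim (\<lambda>N. S (Suc N)) (u + c *\<^sub>C V f)" by (simp add: Ssuc)
  qed
  have kill: "T f = 0" if T: "bounded_clinear T" and z: "\<And>n. T ((V ^^ n) u) = 0" for T
  proof -
    have "T (S N) = 0" for N unfolding S_def bcl_sum[OF T] by (simp add: bcl_scale[OF T] z)
    then have l0: "clim (\<lambda>N. T (S N)) 0" by (simp add: clim_const)
    have "clim (\<lambda>N. T (S N)) (T f)" by (rule clim_bcl[OF T lim])
    from clim_unique[OF this l0] show ?thesis .
  qed
  show ?thesis
    apply (rule that[of f, OF fp])
    apply (rule kill)
    apply assumption+
    done
qed

lemma pow_cinner:
  assumes "isometry V" "is_adjoint V Vs"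
  shows "cinner ((V ^^ n) a) ((V ^^ n) b) = cinner a b"
  by (induction n) (simp_all add: iso_cinner[OF assms])

lemma orth_pow:
  assumes iso: "isometry V" and adj: "is_adjoint V Vs" and e: "Vs e = 0" and mn: "m \<noteq> n"
  shows "cinner ((V ^^ m) e) ((V ^^ n) e) = 0"
proof -
  have base: "cinner ((V ^^ Suc k) e) e = 0" for k
  proof -
    have "(V ^^ Suc k) e = V ((V ^^ k) e)" by simp
    then have "cinner ((V ^^ Suc k) e) e = cinner (V ((V ^^ k) e)) e" by simp
    also have "\<dots> = cinner ((V ^^ k) e) (Vs e)" by (rule adj_eq[OF adj])
    finally show ?thesis by (simp add: e)
  qed
  have gt: "cinner ((V ^^ m) e) ((V ^^ n) e) = 0" if "m > n" for m n
  proof -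
    define k where "k = m - n - 1"
    have m: "m = n + Suc k" using \<open>m > n\<close> unfolding k_def by simp
    have eq: "(V ^^ m) e = (V ^^ n) ((V ^^ Suc k) e)" by (simp only: m funpow_add comp_apply)
    have "cinner ((V ^^ n) ((V ^^ Suc k) e)) ((V ^^ n) e) = cinner ((V ^^ Suc k) e) e"
      by (rule pow_cinner[OF iso adj])
    then show ?thesis using base[of k] by (simp only: eq)
  qed
  show ?thesis
  proof (cases "m > n")
    case True then show ?thesis by (rule gt)
  next
    case False
    then have "n > m" using mn by simp
    then have "cinner ((V ^^ n) e) ((V ^^ m) e) = 0" by (rule gt)
    moreover have "cinner ((V ^^ m) e) ((V ^^ n) e) = cnj (cinner ((V ^^ n) e) ((V ^^ m) e))"
      by (rule cinner_commute)
    ultimately show ?thesis by simp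
  qed
qed

locale pair =
  fixes V1 V1s V2 V2s :: "'a::complex_hilbert \<Rightarrow> 'a"
  assumes iso1: "isometry V1" and iso2: "isometry V2"
    and comm: "\<And>x. V1 (V2 x) = V2 (V1 x)"
    and adj1: "is_adjoint V1 V1s" and adj2: "is_adjoint V2 V2s"
    and pos: "positive_op (defect V1 V1s V2 V2s)"
    and nz: "defect V1 V1s V2 V2s \<noteq> (\<lambda>x. 0)"
begin

lemma b1: "bounded_clinear V1" by (rule iso_bcl[OF iso1 adj1])
lemma b2: "bounded_clinear V2" by (rule iso_bcl[OF iso2 adj2])
lemma bs1: "bounded_clinear V1s" by (rule adj_bcl[OF iso1 adj1])
lemma bs2: "bounded_clinear V2s" by (rule adj_bcl[OF iso2 adj2])
lemma can1: "V1s (V1 x) = x" by (rule adj_iso_cancel[OF iso1 adj1])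
lemma can2: "V2s (V2 x) = x" by (rule adj_iso_cancel[OF iso2 adj2])

lemma adjc: "V1s (V2s z) = V2s (V1s z)"
proof (rule cinner_ext_right)
  fix w
  have "cinner w (V1s (V2s z)) = cinner (V1 w) (V2s z)" by (rule adj_eq[OF adj1, symmetric])
  also have "\<dots> = cinner (V2 (V1 w)) z" by (rule adj_eq[OF adj2, symmetric])
  also have "\<dots> = cinner (V1 (V2 w)) z" by (simp only: comm)
  also have "\<dots> = cinner (V2 w) (V1s z)" by (rule adj_eq[OF adj1])
  also have "\<dots> = cinner w (V2s (V1s z))" by (rule adj_eq[OF adj2])
  finally show "cinner w (V1s (V2s z)) = cinner w (V2s (V1s z))" .
qed

lemma defect_sym: "defect V1 V1s V2 V2s = defect V2 V2s V1 V1s"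
proof
  fix x
  have "V1 (V2 (V2s (V1s x))) = V2 (V1 (V1s (V2s x)))" by (simp only: comm adjc)
  then show "defect V1 V1s V2 V2s x = defect V2 V2s V1 V1s x"
    unfolding defect_def by (simp add: algebra_simps)
qed

lemma swap: "pair V2 V2s V1 V1s"
proof
  show "isometry V2" "isometry V1" "is_adjoint V2 V2s" "is_adjoint V1 V1s"
    by (rule iso2 iso1 adj2 adj1)+
  show "V2 (V1 x) = V1 (V2 x)" for x by (rule comm[symmetric])
  show "positive_op (defect V2 V2s V1 V1s)" using pos by (simp only: defect_sym)
  show "defect V2 V2s V1 V1s \<noteq> (\<lambda>x. 0)" using nz unfolding defect_sym .
qed

lemma invA:
  assumes u: "V2s u = 0" shows "V2s (V1 u) = 0"
proof -
  define z where "z = V1 u"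
  define D where "D = defect V1 V1s V2 V2s"
  have "V2s (V1s z) = 0" by (simp add: z_def can1 u)
  then have "D z = z - V1 (V1s z) - V2 (V2s z)"
    unfolding D_def defect_def by (simp add: bcl_zero[OF b1] bcl_zero[OF b2])
  also have "V1 (V1s z) = z" by (simp add: z_def can1)
  finally have Dz: "D z = - V2 (V2s z)" by simp
  have "cinner (D z) z = - cinner (V2 (V2s z)) z" by (simp add: Dz cinner_minus_left)
  also have "cinner (V2 (V2s z)) z = cinner (V2s z) (V2s z)" by (rule adj_eq[OF adj2])
  finally have eq: "cinner (D z) z = - cinner (V2s z) (V2s z)" .
  have "Re (cinner (D z) z) \<ge> 0" using pos unfolding positive_op_def D_def by blast
  then have "Re (cinner (V2s z) (V2s z)) \<le> 0" by (simp add: eq)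
  with cinner_ge_zero[of "V2s z"] have "Re (cinner (V2s z) (V2s z)) = 0" by linarith
  then have "cnorm (V2s z) = 0" by (simp add: cnorm_def)
  then show ?thesis by (simp add: z_def)
qed

lemma invB: "V1s u = 0 \<Longrightarrow> V1s (V2 u) = 0"
  by (rule pair.invA[OF swap])

lemma ranC1: "V1s (defect V1 V1s V2 V2s y) = 0"
proof -
  define p where "p = V2s y - V1 (V1s (V2s y))"
  have p0: "V1s p = 0" by (simp add: p_def adj_diff[OF adj1] can1)
  have V2p: "V2 p = V2 (V2s y) - V1 (V2 (V2s (V1s y)))"
    by (simp add: p_def bcl_diff[OF b2] comm adjc)
  have "defect V1 V1s V2 V2s y = (y - V1 (V1s y)) - V2 p"
    unfolding defect_def V2p by (simp add: algebra_simps)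
  then have "V1s (defect V1 V1s V2 V2s y) = (V1s y - V1s (V1 (V1s y))) - V1s (V2 p)"
    by (simp add: adj_diff[OF adj1])
  also have "\<dots> = 0" by (simp add: can1 invB[OF p0])
  finally show ?thesis .
qed

lemma ranC2: "V2s (defect V1 V1s V2 V2s y) = 0"
  using pair.ranC1[OF swap] by (simp add: defect_sym)

lemma e_ex: obtains e where "e \<noteq> 0" "V1s e = 0" "V2s e = 0"
proof -
  obtain y where "defect V1 V1s V2 V2s y \<noteq> 0" using nz by auto
  then show ?thesis using that ranC1 ranC2 by blast
qed

end

context pair
begin

lemma comm_pow: "(V1 ^^ m) (V2 z) = V2 ((V1 ^^ m) z)"
  by (induction m) (simp_all add: comm)

lemma eig:
  assumes e1: "V1s e = 0" and e2: "V2s e = 0" and c1: "cmod c1 < 1" and c2: "cmod c2 < 1"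
  obtains x where "V1s x = c1 *\<^sub>C x" "V2s x = c2 *\<^sub>C x" "cinner e x = cinner e e"
     "(cnorm x)\<^sup>2 * ((1 - (cmod c1)\<^sup>2) * (1 - (cmod c2)\<^sup>2)) = (cnorm e)\<^sup>2"
proof -
  have invAn: "V2s ((V1 ^^ m) e) = 0" for m by (induction m) (simp_all add: e2 invA)
  have invBn: "V1s ((V2 ^^ n) e) = 0" for n by (induction n) (simp_all add: e1 invB)
  obtain f where f: "f = e + c2 *\<^sub>C V2 f"
    and fk: "\<And>T. bounded_clinear T \<Longrightarrow> (\<And>n. T ((V2 ^^ n) e) = 0) \<Longrightarrow> T f = 0"
    using geom_series[OF iso2 c2] by metis
  have f1: "V1s f = 0" by (rule fk[OF bs1 invBn])
  from f have "V2s f = V2s (e + c2 *\<^sub>C V2 f)" by (rule arg_cong)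
  also have "\<dots> = c2 *\<^sub>C f" by (simp add: adj_add[OF adj2] adj_scale[OF adj2] can2 e2)
  finally have f2: "V2s f = c2 *\<^sub>C f" .
  obtain x where x: "x = f + c1 *\<^sub>C V1 x"
    and xk: "\<And>T. bounded_clinear T \<Longrightarrow> (\<And>n. T ((V1 ^^ n) f) = 0) \<Longrightarrow> T x = 0"
    using geom_series[OF iso1 c1] by metis
  from x have "V1s x = V1s (f + c1 *\<^sub>C V1 x)" by (rule arg_cong)
  also have "\<dots> = c1 *\<^sub>C x" by (simp add: adj_add[OF adj1] adj_scale[OF adj1] can1 f1)
  finally have x1: "V1s x = c1 *\<^sub>C x" .
  have x2: "V2s x = c2 *\<^sub>C x"
  proof -
    let ?T = "\<lambda>z. V2s z - c2 *\<^sub>C z"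
    have bT: "bounded_clinear ?T" by (rule bcl_sub[OF bs2 bcl_scaleC_op])
    have "?T ((V1 ^^ m) f) = 0" for m
    proof -
      have bm: "bounded_clinear (V1 ^^ m)" by (rule pow_bcl[OF b1])
      from f have "(V1 ^^ m) f = (V1 ^^ m) (e + c2 *\<^sub>C V2 f)" by (rule arg_cong)
      also have "\<dots> = (V1 ^^ m) e + c2 *\<^sub>C V2 ((V1 ^^ m) f)"
        by (simp add: bcl_add[OF bm] bcl_scale[OF bm] comm_pow)
      finally have eq: "(V1 ^^ m) f = (V1 ^^ m) e + c2 *\<^sub>C V2 ((V1 ^^ m) f)" .
      have "V2s ((V1 ^^ m) f) = V2s ((V1 ^^ m) e + c2 *\<^sub>C V2 ((V1 ^^ m) f))"
        using eq by (rule arg_cong)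
      also have "\<dots> = c2 *\<^sub>C (V1 ^^ m) f"
        by (simp add: adj_add[OF adj2] adj_scale[OF adj2] can2 invAn)
      finally show ?thesis by simp
    qed
    then have "?T x = 0" by (rule xk[OF bT])
    then show ?thesis by simp
  qed
  have ef: "cinner e f = cinner e e"
  proof -
    from f have "cinner e f = cinner e (e + c2 *\<^sub>C V2 f)" by (rule arg_cong)
    also have "\<dots> = cinner e e + cnj c2 * cinner e (V2 f)"
      by (simp add: cinner_add_right cinner_scaleC_right)
    also have "cinner e (V2 f) = cinner (V2s e) f" by (rule adj_eq'[OF adj2, symmetric])
    finally show ?thesis by (simp add: e2)
  qed
  have ex: "cinner e x = cinner e e"
  proof -
    from x have "cinner e x = cinner e (f + c1 *\<^sub>C V1 x)" by (rule arg_cong)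
    also have "\<dots> = cinner e f + cnj c1 * cinner e (V1 x)"
      by (simp add: cinner_add_right cinner_scaleC_right)
    also have "cinner e (V1 x) = cinner (V1s e) x" by (rule adj_eq'[OF adj1, symmetric])
    finally show ?thesis by (simp add: e1 ef)
  qed
  have nf: "(cnorm f)\<^sup>2 = (cnorm e)\<^sup>2 + (cmod c2)\<^sup>2 * (cnorm f)\<^sup>2"
  proof -
    have "cinner e (V2 f) = cinner (V2s e) f" by (rule adj_eq'[OF adj2, symmetric])
    then have "cinner e (c2 *\<^sub>C V2 f) = 0" by (simp add: cinner_scaleC_right e2)
    then have "(cnorm (e + c2 *\<^sub>C V2 f))\<^sup>2 = (cnorm e)\<^sup>2 + (cnorm (c2 *\<^sub>C V2 f))\<^sup>2"
      by (rule pythagoras)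
    then have "(cnorm f)\<^sup>2 = (cnorm e)\<^sup>2 + (cnorm (c2 *\<^sub>C V2 f))\<^sup>2"
      by (simp only: f[symmetric])
    then show ?thesis
      by (simp add: cnorm_scaleC iso_norm[OF iso2 adj2] power_mult_distrib)
  qed
  have nx: "(cnorm x)\<^sup>2 = (cnorm f)\<^sup>2 + (cmod c1)\<^sup>2 * (cnorm x)\<^sup>2"
  proof -
    have "cinner f (V1 x) = cinner (V1s f) x" by (rule adj_eq'[OF adj1, symmetric])
    then have "cinner f (c1 *\<^sub>C V1 x) = 0" by (simp add: cinner_scaleC_right f1)
    then have "(cnorm (f + c1 *\<^sub>C V1 x))\<^sup>2 = (cnorm f)\<^sup>2 + (cnorm (c1 *\<^sub>C V1 x))\<^sup>2"
      by (rule pythagoras)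
    then have "(cnorm x)\<^sup>2 = (cnorm f)\<^sup>2 + (cnorm (c1 *\<^sub>C V1 x))\<^sup>2"
      by (simp only: x[symmetric])
    then show ?thesis
      by (simp add: cnorm_scaleC iso_norm[OF iso1 adj1] power_mult_distrib)
  qed
  have a: "(cnorm x)\<^sup>2 * (1 - (cmod c1)\<^sup>2) = (cnorm f)\<^sup>2" using nx by (simp add: algebra_simps)
  have b: "(cnorm f)\<^sup>2 * (1 - (cmod c2)\<^sup>2) = (cnorm e)\<^sup>2" using nf by (simp add: algebra_simps)
  have "(cnorm x)\<^sup>2 * ((1 - (cmod c1)\<^sup>2) * (1 - (cmod c2)\<^sup>2)) = (cnorm e)\<^sup>2"
    by (simp only: mult.assoc[symmetric] a b)
  then show ?thesis using that x1 x2 ex by blast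
qed

lemma joint_eig:
  assumes "cmod w1 < 1" "cmod w2 < 1"
  shows "joint_eigenvalue V1s V2s (w1, w2)"
proof -
  obtain e where e: "e \<noteq> 0" "V1s e = 0" "V2s e = 0" by (rule e_ex)
  obtain x where x: "V1s x = w1 *\<^sub>C x" "V2s x = w2 *\<^sub>C x" "cinner e x = cinner e e"
    using eig[OF e(2,3) assms] by metis
  have "x \<noteq> 0"
  proof
    assume "x = 0"
    then have "cinner e e = 0" using x(3) by simp
    then show False using e(1) by (simp add: cinner_eq_zero_iff)
  qed
  then show ?thesis unfolding joint_eigenvalue_def using x(1,2) by auto
qed

lemma inner_shift:
  assumes x1: "V1s x = c1 *\<^sub>C x" and x2: "V2s x = c2 *\<^sub>C x"
  shows "cinner (shift_op V1 l1 h2 - shift_op V2 l2 h1) x =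
    (cnj c1 - l1) * cinner h2 x - (cnj c2 - l2) * cinner h1 x"
proof -
  have "cinner (V1 h2) x = cnj c1 * cinner h2 x"
    by (simp add: adj_eq[OF adj1] x1 cinner_scaleC_right)
  moreover have "cinner (V2 h1) x = cnj c2 * cinner h1 x"
    by (simp add: adj_eq[OF adj2] x2 cinner_scaleC_right)
  ultimately show ?thesis
    unfolding shift_op_def cinner_diff_left cinner_scaleC_left by (simp add: algebra_simps)
qed

lemma break_int:
  assumes "cmod l1 < 1" "cmod l2 < 1"
  shows "koszul_breaks_at 3 (shift_op V1 l1) (shift_op V2 l2)"
proof -
  obtain e where e: "e \<noteq> 0" "V1s e = 0" "V2s e = 0" by (rule e_ex)
  have c: "cmod (cnj l1) < 1" "cmod (cnj l2) < 1" using assms by simp_all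
  obtain x where x: "V1s x = cnj l1 *\<^sub>C x" "V2s x = cnj l2 *\<^sub>C x" "cinner e x = cinner e e"
    using eig[OF e(2,3) c] by metis
  have "x \<notin> {shift_op V1 l1 h2 - shift_op V2 l2 h1 | h1 h2. True}"
  proof
    assume "x \<in> {shift_op V1 l1 h2 - shift_op V2 l2 h1 | h1 h2. True}"
    then obtain h1 h2 where "x = shift_op V1 l1 h2 - shift_op V2 l2 h1" by blast
    then have "cinner x x = 0" using inner_shift[OF x(1,2), of l1 h2 l2 h1] by simp
    then have "x = 0" by (simp add: cinner_eq_zero_iff)
    then have "cinner e e = 0" using x(3) by simp
    then show False using e(1) by (simp add: cinner_eq_zero_iff)
  qed
  then have "{shift_op V1 l1 h2 - shift_op V2 l2 h1 | h1 h2. True} \<noteq> UNIV" by blast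
  then show ?thesis unfolding koszul_breaks_at_def by simp
qed

end

lemma aux_ineq:
  fixes r s X E :: real
  assumes r: "0 < r" "r < 1" and s: "0 \<le> s" "s \<le> 1" and X: "0 \<le> X" and E: "0 \<le> E"
    and eq: "X\<^sup>2 * ((1 - r\<^sup>2) * (1 - (r * s)\<^sup>2)) = E\<^sup>2"
  shows "(1 - r) * X \<le> E"
proof -
  have rr: "r\<^sup>2 \<le> r" using r by (simp add: power2_eq_square mult_left_le_one_le less_imp_le)
  have rs: "(r * s)\<^sup>2 \<le> r\<^sup>2" using r s by (simp add: power2_eq_square mult_left_le mult_mono)
  have p: "1 - r \<le> 1 - r\<^sup>2" using rr by simp
  have q: "1 - r \<le> 1 - (r * s)\<^sup>2" using rr rs by simp
  have "(1 - r) * (1 - r) \<le> (1 - r\<^sup>2) * (1 - (r * s)\<^sup>2)"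
    using p q r by (intro mult_mono) auto
  then have "X\<^sup>2 * ((1 - r) * (1 - r)) \<le> X\<^sup>2 * ((1 - r\<^sup>2) * (1 - (r * s)\<^sup>2))"
    by (intro mult_left_mono) auto
  then have "((1 - r) * X)\<^sup>2 \<le> E\<^sup>2" using eq by (simp add: power2_eq_square algebra_simps)
  then show ?thesis using E by (rule power2_le_imp_le)
qed

context pair
begin

lemma break_bd:
  assumes l1: "cmod l1 = 1" and l2: "cmod l2 \<le> 1"
  shows "koszul_breaks_at 3 (shift_op V1 l1) (shift_op V2 l2)"
proof (rule ccontr)
  assume nb: "\<not> ?thesis"
  then have all: "{shift_op V1 l1 h2 - shift_op V2 l2 h1 | h1 h2. True} = UNIV"
    unfolding koszul_breaks_at_def by simp
  obtain e where e: "e \<noteq> 0" "V1s e = 0" "V2s e = 0" by (rule e_ex)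
  define a where "a = (\<lambda>n::nat. cnj l1 ^ n / of_nat (Suc n))"
  define z where "z = (\<lambda>n. a n *\<^sub>C (V1 ^^ n) e)"
  have orth: "cinner (z m) (z n) = 0" if "m \<noteq> n" for m n
    unfolding z_def using orth_pow[OF iso1 adj1 e(2) that]
    by (simp add: cinner_scaleC_left cinner_scaleC_right)
  have zn: "(cnorm (z n))\<^sup>2 = (cnorm e)\<^sup>2 * inverse (real (Suc n) ^ 2)" for n
  proof -
    have "cmod (a n) = 1 / real (Suc n)"
      unfolding a_def by (simp only: norm_divide norm_power complex_mod_cnj l1 norm_of_nat power_one)
    then have "cmod (a n) = inverse (real (Suc n))" by (simp add: divide_inverse)
    then show ?thesis unfolding z_def
      by (simp add: cnorm_scaleC pow_norm[OF iso1] power_mult_distrib power_inverse)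
  qed
  have s0: "summable (\<lambda>n. inverse (real n ^ 2))" by (rule inverse_power_summable) simp
  have s1: "summable (\<lambda>n. inverse (real (Suc n) ^ 2))"
    using summable_Suc_iff[of "\<lambda>n. inverse (real n ^ 2)"] s0 by blast
  have summ: "summable (\<lambda>n. (cnorm (z n))\<^sup>2)"
    unfolding zn by (rule summable_mult[OF s1])
  obtain y where ylim: "clim (\<lambda>N. \<Sum>n<N. z n) y" using conv_orth[OF summ orth] by blast
  have "y \<in> {shift_op V1 l1 h2 - shift_op V2 l2 h1 | h1 h2. True}" using all by simp
  then obtain h1 h2 where y: "y = shift_op V1 l1 h2 - shift_op V2 l2 h1" by blast
  define K where "K = (cnorm h1 + cnorm h2) * cnorm e"
  have bound: "(cnorm e)\<^sup>2 * (\<Sum>n<M. r ^ n / real (Suc n)) \<le> K" if r: "0 < r" "r < 1" for r M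
  proof -
    define c1 where "c1 = complex_of_real r * cnj l1"
    define c2 where "c2 = complex_of_real r * cnj l2"
    have mc1: "cmod c1 = r" using r l1 by (simp add: c1_def norm_mult)
    have mc2: "cmod c2 = r * cmod l2" using r by (simp add: c2_def norm_mult)
    have c1: "cmod c1 < 1" using mc1 r by simp
    have rl: "r * cmod l2 \<le> r" using l2 r by (intro mult_left_le) auto
    have c2: "cmod c2 < 1" using rl mc2 r by linarith
    obtain x where x1: "V1s x = c1 *\<^sub>C x" and x2: "V2s x = c2 *\<^sub>C x"
      and ex: "cinner e x = cinner e e"
      and nx: "(cnorm x)\<^sup>2 * ((1 - (cmod c1)\<^sup>2) * (1 - (cmod c2)\<^sup>2)) = (cnorm e)\<^sup>2"
      using eig[OF e(2,3) c1 c2] by metis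
    have pw: "cinner ((V1 ^^ n) e) x = cnj c1 ^ n * cinner e e" for n
    proof (induction n)
      case 0 then show ?case by (simp add: ex)
    next
      case (Suc n)
      have "cinner ((V1 ^^ Suc n) e) x = cinner (V1 ((V1 ^^ n) e)) x" by simp
      also have "\<dots> = cinner ((V1 ^^ n) e) (V1s x)" by (rule adj_eq[OF adj1])
      also have "\<dots> = cnj c1 * cinner ((V1 ^^ n) e) x" by (simp add: x1 cinner_scaleC_right)
      finally show ?case by (simp add: Suc.IH)
    qed
    have u: "cnj l1 * l1 = 1"
    proof -
      have "complex_of_real ((cmod l1)\<^sup>2) = l1 * cnj l1" by (rule complex_norm_square)
      then show ?thesis using l1 by (simp add: mult.commute)
    qed
    have azn: "a n * cnj c1 ^ n = complex_of_real (r ^ n / real (Suc n))" for n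
    proof -
      have "a n * cnj c1 ^ n = (cnj l1 * l1) ^ n * complex_of_real r ^ n / of_nat (Suc n)"
        by (simp add: a_def c1_def power_mult_distrib mult_ac)
      also have "\<dots> = complex_of_real (r ^ n / real (Suc n))" by (simp add: u)
      finally show ?thesis .
    qed
    have partial: "cinner (\<Sum>n<N. z n) x =
        complex_of_real ((cnorm e)\<^sup>2 * (\<Sum>n<N. r ^ n / real (Suc n)))" for N
    proof -
      have "cinner (\<Sum>n<N. z n) x = (\<Sum>n<N. a n * cnj c1 ^ n * cinner e e)"
        by (simp add: cinner_sum_left z_def cinner_scaleC_left pw mult.assoc)
      also have "\<dots> = (\<Sum>n<N. complex_of_real (r ^ n / real (Suc n)) * complex_of_real ((cnorm e)\<^sup>2))"
        by (simp only: azn cinner_self_cnorm)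
      also have "\<dots> = complex_of_real ((cnorm e)\<^sup>2 * (\<Sum>n<N. r ^ n / real (Suc n)))"
        by (simp add: sum_distrib_left mult.commute)
      finally show ?thesis .
    qed
    have Rlim: "(\<lambda>N. (cnorm e)\<^sup>2 * (\<Sum>n<N. r ^ n / real (Suc n))) \<longlonglongrightarrow> Re (cinner y x)"
      using tendsto_Re[OF clim_cinner[OF ylim, of x]] by (simp add: partial)
    have "(cnorm e)\<^sup>2 * (\<Sum>n<M. r ^ n / real (Suc n)) \<le> Re (cinner y x)"
    proof (rule LIMSEQ_le_const[OF Rlim], intro exI allI impI)
      fix n assume "M \<le> n"
      then have "(\<Sum>n<M. r ^ n / real (Suc n)) \<le> (\<Sum>n<n. r ^ n / real (Suc n))"
        using r by (intro sum_mono2) auto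
      then show "(cnorm e)\<^sup>2 * (\<Sum>n<M. r ^ n / real (Suc n)) \<le> (cnorm e)\<^sup>2 * (\<Sum>n<n. r ^ n / real (Suc n))"
        by (intro mult_left_mono) auto
    qed
    also have "Re (cinner y x) \<le> cmod (cinner y x)" by (rule complex_Re_le_cmod)
    also have "cmod (cinner y x) \<le> K"
    proof -
      have iy: "cinner y x = (cnj c1 - l1) * cinner h2 x - (cnj c2 - l2) * cinner h1 x"
        unfolding y by (rule inner_shift[OF x1 x2])
      have nr: "cmod (complex_of_real (r - 1)) = 1 - r"
        using r by (subst norm_of_real) simp
      have "cnj c1 - l1 = complex_of_real (r - 1) * l1" by (simp add: c1_def algebra_simps)
      then have d1: "cmod (cnj c1 - l1) = 1 - r" by (simp only: norm_mult nr l1 mult_1_right)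
      have "cnj c2 - l2 = complex_of_real (r - 1) * l2" by (simp add: c2_def algebra_simps)
      then have "cmod (cnj c2 - l2) = (1 - r) * cmod l2" by (simp only: norm_mult nr)
      also have "\<dots> \<le> (1 - r) * 1" using l2 r by (intro mult_left_mono) auto
      finally have d2: "cmod (cnj c2 - l2) \<le> 1 - r" by simp
      have nxb: "(1 - r) * cnorm x \<le> cnorm e"
        by (rule aux_ineq[OF r _ l2 cnorm_ge0 cnorm_ge0]) (use nx mc1 mc2 in simp_all)
      have t0: "cmod (cinner y x) \<le> cmod ((cnj c1 - l1) * cinner h2 x) + cmod ((cnj c2 - l2) * cinner h1 x)"
        unfolding iy by (rule norm_triangle_ineq4)
      have t1: "cmod ((cnj c1 - l1) * cinner h2 x) \<le> (1 - r) * (cnorm h2 * cnorm x)"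
        unfolding norm_mult d1 using r by (intro mult_left_mono cauchy_schwarz) auto
      have t2: "cmod ((cnj c2 - l2) * cinner h1 x) \<le> (1 - r) * (cnorm h1 * cnorm x)"
        unfolding norm_mult using d2 cauchy_schwarz[of h1 x] r
        by (intro mult_mono) auto
      have t3: "(1 - r) * (cnorm h2 * cnorm x) + (1 - r) * (cnorm h1 * cnorm x)
          = (cnorm h1 + cnorm h2) * ((1 - r) * cnorm x)" by (simp add: algebra_simps)
      have t4: "(cnorm h1 + cnorm h2) * ((1 - r) * cnorm x) \<le> (cnorm h1 + cnorm h2) * cnorm e"
        using nxb by (intro mult_left_mono) auto
      have "cmod (cinner y x) \<le> (cnorm h1 + cnorm h2) * cnorm e"
        using t0 t1 t2 t3 t4 by linarith
      then show ?thesis unfolding K_def .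
    qed
    finally show ?thesis .
  qed
  have epos: "(cnorm e)\<^sup>2 > 0" using e(1) by simp
  have harm: "(\<Sum>n<M. inverse (real (Suc n))) \<le> K / (cnorm e)\<^sup>2" for M
  proof -
    have lim: "((\<lambda>r. (cnorm e)\<^sup>2 * (\<Sum>n<M. r ^ n / real (Suc n))) \<longlongrightarrow>
        (cnorm e)\<^sup>2 * (\<Sum>n<M. 1 ^ n / real (Suc n))) (at_left 1)"
      by (intro tendsto_intros) auto
    have ev: "eventually (\<lambda>r. K \<ge> (cnorm e)\<^sup>2 * (\<Sum>n<M. r ^ n / real (Suc n))) (at_left (1::real))"
      using eventually_at_left_real[of 0 "1::real", OF zero_less_one]
    proof (rule eventually_mono)
      fix r :: real assume "r \<in> {0<..<1}"
      then show "K \<ge> (cnorm e)\<^sup>2 * (\<Sum>n<M. r ^ n / real (Suc n))" by (intro bound) auto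
    qed
    have "(cnorm e)\<^sup>2 * (\<Sum>n<M. 1 ^ n / real (Suc n)) \<le> K"
      by (rule tendsto_upperbound[OF lim ev trivial_limit_at_left_real])
    then have "(cnorm e)\<^sup>2 * (\<Sum>n<M. inverse (real (Suc n))) \<le> K"
      by (simp add: divide_inverse)
    then show ?thesis using epos by (simp add: field_simps mult.commute)
  qed
  have "summable (\<lambda>n. inverse (real (Suc n)))"
    by (rule summableI_nonneg_bounded[OF _ harm]) simp
  then have "summable (\<lambda>n. inverse (real n))"
    using summable_Suc_iff[of "\<lambda>n. inverse (real n)"] by blast
  then show False using not_summable_harmonic[where 'a=real] by simp
qed

end

lemma shift_bcl: "bounded_clinear V \<Longrightarrow> bounded_clinear (shift_op V l)"
  unfolding shift_op_def by (rule bcl_sub[OF _ bcl_scaleC_op])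

lemma shift_comm:
  assumes b1: "bounded_clinear V1" and b2: "bounded_clinear V2" and comm: "\<And>x. V1 (V2 x) = V2 (V1 x)"
  shows "shift_op V1 l1 (shift_op V2 l2 x) = shift_op V2 l2 (shift_op V1 l1 x)"
  unfolding shift_op_def
  by (simp add: bcl_diff[OF b1] bcl_scale[OF b1] bcl_diff[OF b2] bcl_scale[OF b2]
      scaleC_diff_right scaleC_scaleC mult.commute comm algebra_simps)

lemma shift_inj:
  assumes iso: "isometry V" and l: "cmod l > 1" and eq: "shift_op V l x = shift_op V l y"
  shows "x = y"
proof -
  have b: "bounded_clinear V" using iso by (simp add: isometry_def)
  have "V (x - y) = l *\<^sub>C (x - y)"
    using eq unfolding shift_op_def by (simp add: bcl_diff[OF b] scaleC_diff_right algebra_simps)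
  then have "cmod l * cnorm (x - y) = cnorm (x - y)"
    using iso unfolding isometry_def by (metis cnorm_scaleC)
  moreover have "cnorm (x - y) = 0"
  proof (rule ccontr)
    assume "cnorm (x - y) \<noteq> 0"
    then have "cnorm (x - y) > 0" using cnorm_ge0[of "x - y"] by linarith
    then have "1 * cnorm (x - y) < cmod l * cnorm (x - y)" using l by (intro mult_strict_right_mono)
    then show False using calculation by simp
  qed
  then show ?thesis by simp
qed

lemma shift_surj:
  fixes V :: "'a::complex_hilbert \<Rightarrow> 'a"
  assumes iso: "isometry V" and l: "cmod l > 1"
  shows "\<exists>x. shift_op V l x = y"
proof -
  have b: "bounded_clinear V" using iso by (simp add: isometry_def)
  define c where "c = inverse l"
  have l0: "l \<noteq> 0" using l by auto
  have c: "cmod c < 1" using l by (simp add: c_def norm_inverse inverse_less_1_iff)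
  have lc: "l * c = 1" using l0 by (simp add: c_def)
  obtain f where f: "f = - (c *\<^sub>C y) + c *\<^sub>C V f"
    using geom_series[OF iso c, of "- (c *\<^sub>C y)"] by metis
  have "l *\<^sub>C f = l *\<^sub>C (- (c *\<^sub>C y) + c *\<^sub>C V f)" using f by (rule arg_cong)
  also have "\<dots> = - y + V f"
    by (simp add: scaleC_add_right scaleC_diff_right scaleC_minus_right scaleC_scaleC lc scaleC_one)
  finally have "shift_op V l f = y" unfolding shift_op_def by simp
  then show ?thesis by blast
qed

lemma exact1:
  assumes b1: "bounded_clinear T1" and b2: "bounded_clinear T2"
    and comm: "\<And>x. T1 (T2 x) = T2 (T1 x)"
    and inj: "\<And>x y. T1 x = T1 y \<Longrightarrow> x = y" and surj: "\<And>y. \<exists>x. T1 x = y"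
  shows "koszul_exact T1 T2"
proof -
  have s1: "{h. T1 h = 0 \<and> T2 h = 0} = {0}"
    using inj[of _ 0] bcl_zero[OF b1] bcl_zero[OF b2] by auto
  have s2: "{(h1, h2). T1 h2 - T2 h1 = 0} = {(T1 h, T2 h) | h. True}"
  proof (intro set_eqI iffI)
    fix p assume "p \<in> {(h1, h2). T1 h2 - T2 h1 = 0}"
    then obtain h1 h2 where p: "p = (h1, h2)" and eq: "T1 h2 = T2 h1" by auto
    obtain h where h: "T1 h = h1" using surj by blast
    have "T1 h2 = T1 (T2 h)" using eq h comm by simp
    then have "h2 = T2 h" by (rule inj)
    then show "p \<in> {(T1 h, T2 h) | h. True}" using p h by blast
  next
    fix p assume "p \<in> {(T1 h, T2 h) | h. True}"
    then show "p \<in> {(h1, h2). T1 h2 - T2 h1 = 0}" using comm by auto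
  qed
  have s3: "{T1 h2 - T2 h1 | h1 h2. True} = UNIV"
  proof (intro set_eqI iffI)
    fix z
    obtain h where "T1 h = z" using surj by blast
    then have "z = T1 h - T2 0" using bcl_zero[OF b2] by simp
    then show "z \<in> {T1 h2 - T2 h1 | h1 h2. True}" by blast
  qed auto
  show ?thesis unfolding koszul_exact_def koszul_breaks_at_def using s1 s2 s3 by auto
qed

lemma exact2:
  assumes b1: "bounded_clinear T1" and b2: "bounded_clinear T2"
    and comm: "\<And>x. T1 (T2 x) = T2 (T1 x)"
    and inj: "\<And>x y. T2 x = T2 y \<Longrightarrow> x = y" and surj: "\<And>y. \<exists>x. T2 x = y"
  shows "koszul_exact T1 T2"
proof -
  have s1: "{h. T1 h = 0 \<and> T2 h = 0} = {0}"
    using inj[of _ 0] bcl_zero[OF b1] bcl_zero[OF b2] by auto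
  have s2: "{(h1, h2). T1 h2 - T2 h1 = 0} = {(T1 h, T2 h) | h. True}"
  proof (intro set_eqI iffI)
    fix p assume "p \<in> {(h1, h2). T1 h2 - T2 h1 = 0}"
    then obtain h1 h2 where p: "p = (h1, h2)" and eq: "T1 h2 = T2 h1" by auto
    obtain h where h: "T2 h = h2" using surj by blast
    have "T2 h1 = T1 h2" using eq by simp
    also have "\<dots> = T1 (T2 h)" using h by simp
    also have "\<dots> = T2 (T1 h)" by (rule comm)
    finally have "T2 h1 = T2 (T1 h)" .
    then have "h1 = T1 h" by (rule inj)
    then show "p \<in> {(T1 h, T2 h) | h. True}" using p h by blast
  next
    fix p assume "p \<in> {(T1 h, T2 h) | h. True}"
    then show "p \<in> {(h1, h2). T1 h2 - T2 h1 = 0}" using comm by auto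
  qed
  have s3: "{T1 h2 - T2 h1 | h1 h2. True} = UNIV"
  proof (intro set_eqI iffI)
    fix z
    obtain h where "T2 h = - z" using surj by blast
    then have "z = T1 0 - T2 h" using bcl_zero[OF b1] by simp
    then show "z \<in> {T1 h2 - T2 h1 | h1 h2. True}" by blast
  qed auto
  show ?thesis unfolding koszul_exact_def koszul_breaks_at_def using s1 s2 s3 by auto
qed

lemma breaks_swap: "koszul_breaks_at 3 T2 T1 \<Longrightarrow> koszul_breaks_at 3 T1 T2"
proof -
  assume a: "koszul_breaks_at 3 T2 T1"
  have "{T2 h2 - T1 h1 | h1 h2. True} \<noteq> UNIV" using a unfolding koszul_breaks_at_def by simp
  moreover have "{T2 h2 - T1 h1 | h1 h2. True} = UNIV" if u: "{T1 h2 - T2 h1 | h1 h2. True} = UNIV"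
  proof (intro set_eqI iffI)
    fix z
    have "- z \<in> {T1 h2 - T2 h1 | h1 h2. True}" using u by simp
    then obtain a b where "- z = T1 b - T2 a" by blast
    then have "z = T2 a - T1 b" by (metis minus_diff_eq minus_minus)
    then show "z \<in> {T2 h2 - T1 h1 | h1 h2. True}" by blast
  qed auto
  ultimately show ?thesis unfolding koszul_breaks_at_def by auto
qed

lemma breaks_not_exact: "koszul_breaks_at 3 T1 T2 \<Longrightarrow> \<not> koszul_exact T1 T2"
  unfolding koszul_exact_def by auto

theorem theorem4p11:
  fixes V1 V2 V1s V2s :: "'a::complex_hilbert \<Rightarrow> 'a"
  assumes "isometry V1" and "isometry V2"
    and "V1 \<circ> V2 = V2 \<circ> V1"
    and "is_adjoint V1 V1s" and "is_adjoint V2 V2s"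
    and "positive_op (defect V1 V1s V2 V2s)"
    and "defect V1 V1s V2 V2s \<noteq> (\<lambda>x. 0)"
  shows "taylor_spectrum V1 V2 = cball 0 1 \<times> cball 0 1 \<and>
         (\<forall>w1 w2. cmod w1 < 1 \<and> cmod w2 < 1 \<longrightarrow> joint_eigenvalue V1s V2s (w1, w2)) \<and>
         (\<forall>w1 w2. cmod w1 < 1 \<and> cmod w2 < 1 \<longrightarrow>
           koszul_breaks_at 3 (shift_op V1 w1) (shift_op V2 w2))"
proof -
  have comm: "V1 (V2 x) = V2 (V1 x)" for x
    using fun_cong[OF assms(3), of x] by (simp only: comp_apply)
  interpret P: pair V1 V1s V2 V2s
    using assms comm by unfold_locales auto
  have b1: "bounded_clinear V1" by (rule P.b1)
  have b2: "bounded_clinear V2" by (rule P.b2)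
  have scomm: "\<And>x. shift_op V1 l1 (shift_op V2 l2 x) = shift_op V2 l2 (shift_op V1 l1 x)" for l1 l2
    by (rule shift_comm[OF b1 b2 comm])
  have inside: "\<not> koszul_exact (shift_op V1 l1) (shift_op V2 l2)"
    if "cmod l1 \<le> 1" "cmod l2 \<le> 1" for l1 l2
  proof (rule breaks_not_exact)
    show "koszul_breaks_at 3 (shift_op V1 l1) (shift_op V2 l2)"
    proof (cases "cmod l1 = 1")
      case True show ?thesis by (rule P.break_bd[OF True that(2)])
    next
      case False
      show ?thesis
      proof (cases "cmod l2 = 1")
        case True
        show ?thesis by (rule breaks_swap[OF pair.break_bd[OF P.swap True that(1)]])
      next
        case False2: False
        have "cmod l1 < 1" using False that(1) by simp
        moreover have "cmod l2 < 1" using False2 that(2) by simp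
        ultimately show ?thesis by (rule P.break_int)
      qed
    qed
  qed
  have outside: "koszul_exact (shift_op V1 l1) (shift_op V2 l2)"
    if "cmod l1 > 1 \<or> cmod l2 > 1" for l1 l2
    using that
  proof
    assume l: "cmod l1 > 1"
    show ?thesis
      by (rule exact1[OF shift_bcl[OF b1] shift_bcl[OF b2] scomm
          shift_inj[OF assms(1) l] shift_surj[OF assms(1) l]])
  next
    assume l: "cmod l2 > 1"
    show ?thesis
      by (rule exact2[OF shift_bcl[OF b1] shift_bcl[OF b2] scomm
          shift_inj[OF assms(2) l] shift_surj[OF assms(2) l]])
  qed
  have spec: "taylor_spectrum V1 V2 = cball 0 1 \<times> cball 0 1"
  proof (intro set_eqI)
    fix p :: "complex \<times> complex"
    obtain l1 l2 where p: "p = (l1, l2)" by (cases p)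
    have "p \<in> taylor_spectrum V1 V2 \<longleftrightarrow> \<not> koszul_exact (shift_op V1 l1) (shift_op V2 l2)"
      unfolding taylor_spectrum_def p by simp
    also have "\<dots> \<longleftrightarrow> cmod l1 \<le> 1 \<and> cmod l2 \<le> 1"
    proof
      assume "\<not> koszul_exact (shift_op V1 l1) (shift_op V2 l2)"
      then have "\<not> (cmod l1 > 1 \<or> cmod l2 > 1)" using outside[of l1 l2] by blast
      then show "cmod l1 \<le> 1 \<and> cmod l2 \<le> 1" by simp
    next
      assume "cmod l1 \<le> 1 \<and> cmod l2 \<le> 1"
      then show "\<not> koszul_exact (shift_op V1 l1) (shift_op V2 l2)" using inside[of l1 l2] by blast
    qed
    also have "\<dots> \<longleftrightarrow> p \<in> cball 0 1 \<times> cball 0 1" unfolding p by (simp add: dist_norm)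
    finally show "p \<in> taylor_spectrum V1 V2 \<longleftrightarrow> p \<in> cball 0 1 \<times> cball 0 1" .
  qed
  show ?thesis using spec P.joint_eig P.break_int by blast
qed

end
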